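(* Let $\mathcal S$ be the toy stabilizer group of a maximal information (pure) state on $N$ elementary systems, and let parties $A$ and $B$ hold $N_A$ and $N_B$ of these elementary systems respectively, with $N_A+N_B = N$. Let $\mathcal S_A$ (resp. $\mathcal S_B$) be the subgroup of elements of $\mathcal S$ acting as the identity on every elementary system of $B$ (resp. of $A$), and $\mathcal S_A\cdot\mathcal S_B$ the group they generate. Then the state is entangled (with respect to $A|B$) if and only if $\mathcal S\neq\mathcal S_A\cdot\mathcal S_B$.
   Context: Toy Pauli matrices $\mathcal{X} = \mathrm{diag}(1,-1,1,-1)$, $\mathcal{Y} = \mathrm{diag}(1,-1,-1,1)$, $\mathcal{Z} = \mathrm{diag}(1,1,-1,-1)$; toy Pauli group $G_N = \{\alpha\,p_1\otimes\cdots\otimes p_N: p_i\in\{\mathbb 1_4,\mathcal X,\mathcal Y,\mathcal Z\},\alpha=\pm1\}$. Elements $g,h\in G_N$ "commute" if their images under the homomorphism $\mathcal X_k\mapsto X_k$, $\mathcal Z_k\mapsto Z_k$, $-\mathbb 1\mapsto -\mathbb 1$ into the $N$-qubit Pauli group commute. A toy stabilizer group is a subgroup of $G_N$ of pairwise "commuting" elements not containing $-\mathbb 1$; its epistemic state is the set of ontic states $e_{i_1}\otimes\cdots\otimes e_{i_N}$ fixed by all its elements. It is a maximal information state if it has $N$ independent generators. A product state between $A$ and $B$ is an epistemic state of the form $E_A\times E_B = \{(a,b): a\in E_A, b\in E_B\}$ with $E_A,E_B$ valid epistemic states on $A$ and $B$. A pure state is entangled if it cannot be written as a product state of epistemic states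 on $A$ and $B$. *)

theory Defs
  imports Main
begin

text \<open>The four single-system toy Pauli matrices; they are diagonal 4x4 matrices,
  and an elementary system has ontic states e_1..e_4, indexed here by 0..3.\<close>
datatype tpauli = PI | PX | PY | PZ

fun pdiag :: "tpauli \<Rightarrow> nat \<Rightarrow> int" where
  "pdiag PI i = 1"
| "pdiag PX i = [1,-1,1,-1] ! i"
| "pdiag PY i = [1,-1,-1,1] ! i"
| "pdiag PZ i = [1,1,-1,-1] ! i"

text \<open>Product of toy Pauli matrices (matrix product of the diagonal matrices;
  no phases occur: X*Z = Y etc.).\<close>
fun pmul :: "tpauli \<Rightarrow> tpauli \<Rightarrow> tpauli" where
  "pmul PI q = q"
| "pmul p PI = p"
| "pmul PX PX = PI" | "pmul PY PY = PI" | "pmul PZ PZ = PI"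
| "pmul PX PY = PZ" | "pmul PY PX = PZ"
| "pmul PX PZ = PY" | "pmul PZ PX = PY"
| "pmul PY PZ = PX" | "pmul PZ PY = PX"

text \<open>An element alpha p_1 (x) ... (x) p_N of G_N is represented by the pair (alpha, [p_1,...,p_N]).\<close>
type_synonym toy = "int \<times> tpauli list"

definition toyG :: "nat \<Rightarrow> toy set" where
  "toyG n = {(a, ps). (a = 1 \<or> a = -1) \<and> length ps = n}"

definition tmul :: "toy \<Rightarrow> toy \<Rightarrow> toy" where
  "tmul g h = (fst g * fst h, map2 pmul (snd g) (snd h))"

definition tone :: "nat \<Rightarrow> toy" where
  "tone n = (1, replicate n PI)"

definition tminus_one :: "nat \<Rightarrow> toy" where
  "tminus_one n = (-1, replicate n PI)"

text \<open>"Commutation": via the map X_k -> X_k, Z_k -> Z_k (so Y_k -> X_k Z_k) into the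
  qubit Pauli group; two qubit Paulis commute iff their symplectic form vanishes mod 2.\<close>
fun xbit :: "tpauli \<Rightarrow> nat" where
  "xbit PX = 1" | "xbit PY = 1" | "xbit PZ = 0" | "xbit PI = 0"
fun zbit :: "tpauli \<Rightarrow> nat" where
  "zbit PZ = 1" | "zbit PY = 1" | "zbit PX = 0" | "zbit PI = 0"

definition tcommute :: "toy \<Rightarrow> toy \<Rightarrow> bool" where
  "tcommute g h \<longleftrightarrow>
     even (sum_list (map2 (\<lambda>p q. xbit p * zbit q + zbit p * xbit q) (snd g) (snd h)))"

inductive_set gen :: "nat \<Rightarrow> toy set \<Rightarrow> toy set" for n :: nat and G :: "toy set" where
  gen_one: "tone n \<in> gen n G"
| gen_base: "g \<in> G \<Longrightarrow> g \<in> gen n G"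
| gen_mul: "g \<in> gen n G \<Longrightarrow> h \<in> gen n G \<Longrightarrow> tmul g h \<in> gen n G"

definition toy_subgroup :: "nat \<Rightarrow> toy set \<Rightarrow> bool" where
  "toy_subgroup n S \<longleftrightarrow> S \<subseteq> toyG n \<and> tone n \<in> S \<and> (\<forall>g\<in>S. \<forall>h\<in>S. tmul g h \<in> S)"

definition toy_stabilizer :: "nat \<Rightarrow> toy set \<Rightarrow> bool" where
  "toy_stabilizer n S \<longleftrightarrow> toy_subgroup n S \<and> (\<forall>g\<in>S. \<forall>h\<in>S. tcommute g h)
     \<and> tminus_one n \<notin> S"

definition independent :: "nat \<Rightarrow> toy set \<Rightarrow> bool" where
  "independent n gs \<longleftrightarrow> (\<forall>g\<in>gs. g \<notin> gen n (gs - {g}))"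

definition max_info :: "nat \<Rightarrow> toy set \<Rightarrow> bool" where
  "max_info n S \<longleftrightarrow> (\<exists>gs. gs \<subseteq> S \<and> finite gs \<and> card gs = n \<and> independent n gs \<and> gen n gs = S)"

text \<open>Ontic state e_{i_1} (x) ... (x) e_{i_N}, represented by [i_1,...,i_N] with i_k in {0..3}.\<close>
definition ontic :: "nat \<Rightarrow> nat list set" where
  "ontic n = {s. length s = n \<and> (\<forall>i\<in>set s. i < 4)}"

text \<open>g fixes the ontic state s iff the corresponding diagonal entry of g is 1.\<close>
definition fixes_ontic :: "toy \<Rightarrow> nat list \<Rightarrow> bool" where
  "fixes_ontic g s \<longleftrightarrow> fst g * prod_list (map2 pdiag (snd g) s) = 1"

definition epistemic :: "nat \<Rightarrow> toy set \<Rightarrow> nat list set" where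
  "epistemic n S = {s \<in> ontic n. \<forall>g\<in>S. fixes_ontic g s}"

definition valid_epistemic :: "nat \<Rightarrow> nat list set \<Rightarrow> bool" where
  "valid_epistemic n E \<longleftrightarrow> (\<exists>S. toy_stabilizer n S \<and> E = epistemic n S)"

section \<open>Bipartition: A = first NA systems, B = last NB systems\<close>

definition entangled :: "nat \<Rightarrow> nat \<Rightarrow> toy set \<Rightarrow> bool" where
  "entangled NA NB S \<longleftrightarrow>
     \<not> (\<exists>EA EB. valid_epistemic NA EA \<and> valid_epistemic NB EB \<and>
          epistemic (NA + NB) S = {a @ b | a b. a \<in> EA \<and> b \<in> EB})"

definition S_A :: "nat \<Rightarrow> nat \<Rightarrow> toy set \<Rightarrow> toy set" where
  "S_A NA NB S = {g \<in> S. \<forall>k. NA \<le> k \<and> k < NA + NB \<longrightarrow> snd g ! k = PI}"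

definition S_B :: "nat \<Rightarrow> nat \<Rightarrow> toy set \<Rightarrow> toy set" where
  "S_B NA NB S = {g \<in> S. \<forall>k. k < NA \<longrightarrow> snd g ! k = PI}"

end

theory Submission
  imports Defs
begin

definition val :: "toy \<Rightarrow> nat list \<Rightarrow> int" where
  "val g s = fst g * prod_list (map2 pdiag (snd g) s)"

lemma fixes_val: "fixes_ontic g s \<longleftrightarrow> val g s = 1"
  by (simp add: fixes_ontic_def val_def)

lemma toyG_iff: "(a, ps) \<in> toyG n \<longleftrightarrow> (a = 1 \<or> a = -1) \<and> length ps = n"
  by (simp add: toyG_def)

lemma four_cases: "(i::nat) < 4 \<Longrightarrow> i = 0 \<or> i = 1 \<or> i = 2 \<or> i = 3"
  by auto

lemma pdiag_mul: "i < 4 \<Longrightarrow> pdiag (pmul p q) i = pdiag p i * pdiag q i"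
  by (drule four_cases) (cases p; cases q; auto)

lemma pdiag_sign: "i < 4 \<Longrightarrow> pdiag p i = 1 \<or> pdiag p i = -1"
  by (drule four_cases) (cases p; auto)

lemma pmul_comm: "pmul p q = pmul q p"
  by (cases p; cases q; simp)

lemma pmul_assoc: "pmul (pmul p q) r = pmul p (pmul q r)"
  by (cases p; cases q; cases r; simp)

lemma pmul_self: "pmul p p = PI"
  by (cases p; simp)

lemma pmul_PI2: "pmul p PI = p"
  by (cases p; simp)

lemma pmul_eq_PI: "pmul p q = PI \<longleftrightarrow> p = q"
  by (cases p; cases q; simp)

lemma prod_map2_pmul:
  "length ps = length s \<Longrightarrow> length qs = length s \<Longrightarrow> \<forall>i\<in>set s. i < 4 \<Longrightarrow>
   prod_list (map2 pdiag (map2 pmul ps qs) s) =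
   prod_list (map2 pdiag ps s) * prod_list (map2 pdiag qs s)"
proof (induction s arbitrary: ps qs)
  case Nil then show ?case by simp
next
  case (Cons i s)
  then obtain p ps' q qs' where "ps = p # ps'" "qs = q # qs'"
    by (metis length_Suc_conv)
  with Cons show ?case by (simp add: pdiag_mul)
qed

lemma val_tmul:
  "length (snd g) = length s \<Longrightarrow> length (snd h) = length s \<Longrightarrow> \<forall>i\<in>set s. i < 4 \<Longrightarrow>
   val (tmul g h) s = val g s * val h s"
  by (simp add: val_def tmul_def prod_map2_pmul)

lemma prod_rep_PI: "prod_list (map2 pdiag (replicate k PI) b) = 1"
proof (induction b arbitrary: k)
  case Nil then show ?case by simp
next
  case (Cons a b) then show ?case by (cases k) auto
qed

lemma val_tone: "val (tone n) s = 1"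
  by (simp add: val_def tone_def prod_rep_PI)

lemma fix_gen:
  assumes "X \<subseteq> toyG n" "s \<in> ontic n" "\<forall>x\<in>X. val x s = 1" "g \<in> gen n X"
  shows "val g s = 1 \<and> g \<in> toyG n"
  using assms(4)
proof induction
  case gen_one then show ?case using val_tone[of n s] by (simp add: tone_def toyG_def)
next
  case (gen_base g) then show ?case using assms by auto
next
  case (gen_mul g h)
  have l: "length (snd g) = length s" "length (snd h) = length s" "\<forall>i\<in>set s. i < 4"
    using gen_mul assms(2) by (auto simp: toyG_def ontic_def)
  have "val (tmul g h) s = 1" using val_tmul[OF l] gen_mul by simp
  moreover have "tmul g h \<in> toyG n" using gen_mul by (auto simp: toyG_def tmul_def)
  ultimately show ?case by simp
qed

lemma gen_sub: assumes "toy_subgroup n S" "X \<subseteq> S" shows "gen n X \<subseteq> S"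
proof
  fix g assume "g \<in> gen n X"
  then show "g \<in> S" using assms by induction (auto simp: toy_subgroup_def)
qed

lemma one_site:
  fixes S1 :: "(int \<times> tpauli) set"
  assumes cl: "\<And>a p b q. (a,p)\<in>S1 \<Longrightarrow> (b,q)\<in>S1 \<Longrightarrow> (a*b, pmul p q) \<in> S1"
    and sg: "\<And>a p. (a,p)\<in>S1 \<Longrightarrow> a = 1 \<or> a = -1"
    and nm: "(-1,PI) \<notin> S1"
  shows "\<exists>i<4. \<forall>a p. (a,p)\<in>S1 \<longrightarrow> a * pdiag p i = 1"
proof -
  have c: "(-1,PX)\<in>S1 \<and> (1,PX)\<in>S1 \<Longrightarrow> False"
          "(-1,PY)\<in>S1 \<and> (1,PY)\<in>S1 \<Longrightarrow> False"
          "(-1,PZ)\<in>S1 \<and> (1,PZ)\<in>S1 \<Longrightarrow> False"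
    using cl[of "-1" PX 1 PX] cl[of "-1" PY 1 PY] cl[of "-1" PZ 1 PZ] nm by auto
  have m: "\<And>a b. (a,PX)\<in>S1 \<Longrightarrow> (b,PY)\<in>S1 \<Longrightarrow> (a*b,PZ)\<in>S1"
          "\<And>a b. (a,PX)\<in>S1 \<Longrightarrow> (b,PZ)\<in>S1 \<Longrightarrow> (a*b,PY)\<in>S1"
          "\<And>a b. (a,PY)\<in>S1 \<Longrightarrow> (b,PZ)\<in>S1 \<Longrightarrow> (a*b,PX)\<in>S1"
    using cl by (metis pmul.simps)+
  have m1: "(1,PX)\<in>S1 \<Longrightarrow> (1,PY)\<in>S1 \<Longrightarrow> (1,PZ)\<in>S1"
    "(1,PX)\<in>S1 \<Longrightarrow> (-1,PY)\<in>S1 \<Longrightarrow> (-1,PZ)\<in>S1"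
    "(-1,PX)\<in>S1 \<Longrightarrow> (1,PY)\<in>S1 \<Longrightarrow> (-1,PZ)\<in>S1"
    "(-1,PX)\<in>S1 \<Longrightarrow> (-1,PY)\<in>S1 \<Longrightarrow> (1,PZ)\<in>S1"
    "(1,PX)\<in>S1 \<Longrightarrow> (1,PZ)\<in>S1 \<Longrightarrow> (1,PY)\<in>S1"
    "(1,PX)\<in>S1 \<Longrightarrow> (-1,PZ)\<in>S1 \<Longrightarrow> (-1,PY)\<in>S1"
    "(-1,PX)\<in>S1 \<Longrightarrow> (1,PZ)\<in>S1 \<Longrightarrow> (-1,PY)\<in>S1"
    "(-1,PX)\<in>S1 \<Longrightarrow> (-1,PZ)\<in>S1 \<Longrightarrow> (1,PY)\<in>S1"
    "(1,PY)\<in>S1 \<Longrightarrow> (1,PZ)\<in>S1 \<Longrightarrow> (1,PX)\<in>S1"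
    "(1,PY)\<in>S1 \<Longrightarrow> (-1,PZ)\<in>S1 \<Longrightarrow> (-1,PX)\<in>S1"
    "(-1,PY)\<in>S1 \<Longrightarrow> (1,PZ)\<in>S1 \<Longrightarrow> (-1,PX)\<in>S1"
    "(-1,PY)\<in>S1 \<Longrightarrow> (-1,PZ)\<in>S1 \<Longrightarrow> (1,PX)\<in>S1"
    using m[of 1 1, simplified] m[of 1 "-1", simplified] m[of "-1" 1, simplified] m[of "-1" "-1", simplified]
    by blast+
  have key: "\<exists>i<4. \<forall>p. (- pdiag p i, p) \<notin> S1"
  proof -
    have "(\<forall>p. (- pdiag p 0, p) \<notin> S1) \<or> (\<forall>p. (- pdiag p 1, p) \<notin> S1) \<or>
          (\<forall>p. (- pdiag p 2, p) \<notin> S1) \<or> (\<forall>p. (- pdiag p 3, p) \<notin> S1)"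
    proof -
      have e: "(\<forall>p. (- pdiag p i, p) \<notin> S1) \<longleftrightarrow>
         (- pdiag PX i, PX) \<notin> S1 \<and> (- pdiag PY i, PY) \<notin> S1 \<and> (- pdiag PZ i, PZ) \<notin> S1"
        if "i < 4" for i
      proof -
        have A: "(\<forall>p. Q p) \<longleftrightarrow> Q PI \<and> Q PX \<and> Q PY \<and> Q PZ" for Q :: "tpauli \<Rightarrow> bool"
          by (metis tpauli.exhaust)
        show ?thesis by (subst A) (simp add: nm)
      qed
      have P: "(\<not>xm\<and>\<not>ym\<and>\<not>zm) \<or> (\<not>xp\<and>\<not>yp\<and>\<not>zm) \<or> (\<not>xm\<and>\<not>yp\<and>\<not>zp) \<or> (\<not>xp\<and>\<not>ym\<and>\<not>zp)"
        if "\<not>(xm\<and>xp)" "\<not>(ym\<and>yp)" "\<not>(zm\<and>zp)"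
          "xp\<longrightarrow>yp\<longrightarrow>zp" "xp\<longrightarrow>ym\<longrightarrow>zm" "xm\<longrightarrow>yp\<longrightarrow>zm" "xm\<longrightarrow>ym\<longrightarrow>zp"
          "xp\<longrightarrow>zp\<longrightarrow>yp" "xp\<longrightarrow>zm\<longrightarrow>ym" "xm\<longrightarrow>zp\<longrightarrow>ym" "xm\<longrightarrow>zm\<longrightarrow>yp"
          "yp\<longrightarrow>zp\<longrightarrow>xp" "yp\<longrightarrow>zm\<longrightarrow>xm" "ym\<longrightarrow>zp\<longrightarrow>xm" "ym\<longrightarrow>zm\<longrightarrow>xp"
        for xp xm yp ym zp zm
        using that by argo
      have Q: "(\<not>((-1,PX)\<in>S1)\<and>\<not>((-1,PY)\<in>S1)\<and>\<not>((-1,PZ)\<in>S1)) \<or> (\<not>((1,PX)\<in>S1)\<and>\<not>((1,PY)\<in>S1)\<and>\<not>((-1,PZ)\<in>S1)) \<or>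
         (\<not>((-1,PX)\<in>S1)\<and>\<not>((1,PY)\<in>S1)\<and>\<not>((1,PZ)\<in>S1)) \<or> (\<not>((1,PX)\<in>S1)\<and>\<not>((-1,PY)\<in>S1)\<and>\<not>((1,PZ)\<in>S1))"
        apply (rule P)
        using c(1) apply blast
        using c(2) apply blast
        using c(3) apply blast
        using m1(1) apply blast
        using m1(2) apply blast
        using m1(3) apply blast
        using m1(4) apply blast
        using m1(5) apply blast
        using m1(6) apply blast
        using m1(7) apply blast
        using m1(8) apply blast
        using m1(9) apply blast
        using m1(10) apply blast
        using m1(11) apply blast
        using m1(12) apply blast
        done
      show ?thesis
        apply (subst e, simp)+
        using Q by simp
    qed
    then show ?thesis
      apply (elim disjE)
      apply (rule exI[of _ 0]; simp)
      apply (rule exI[of _ 1]; simp)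
      apply (rule exI[of _ 2]; simp)
      apply (rule exI[of _ 3]; simp)
      done
  qed
  then obtain i where i: "i < 4" "\<forall>p. (- pdiag p i, p) \<notin> S1" by blast
  have "\<forall>a p. (a,p)\<in>S1 \<longrightarrow> a * pdiag p i = 1"
  proof (intro allI impI)
    fix a p assume ap: "(a,p) \<in> S1"
    then have "a \<noteq> - pdiag p i" using i by auto
    then show "a * pdiag p i = 1" using sg[OF ap] pdiag_sign[OF i(1), of p] by auto
  qed
  then show ?thesis using i by blast
qed

lemma L1:
  "\<forall>S. S \<subseteq> toyG n \<longrightarrow> (\<forall>g\<in>S. \<forall>h\<in>S. tmul g h \<in> S) \<longrightarrow> tminus_one n \<notin> S
     \<longrightarrow> (\<exists>s\<in>ontic n. \<forall>g\<in>S. val g s = 1)"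
proof (induction n)
  case 0
  show ?case
  proof (intro allI impI)
    fix S :: "toy set"
    assume S: "S \<subseteq> toyG 0" "tminus_one 0 \<notin> S"
    have "\<forall>g\<in>S. val g [] = 1"
    proof
      fix g assume "g \<in> S"
      with S obtain a where "g = (a, [])" "a = 1 \<or> a = -1"
        by (cases g) (auto simp: toyG_def)
      with S \<open>g \<in> S\<close> show "val g [] = 1" by (auto simp: val_def tminus_one_def)
    qed
    then show "\<exists>s\<in>ontic 0. \<forall>g\<in>S. val g s = 1" by (auto simp: ontic_def)
  qed
next
  case (Suc n)
  show ?case
  proof (intro allI impI)
    fix S :: "toy set"
    assume Ssub: "S \<subseteq> toyG (Suc n)" and Scl: "\<forall>g\<in>S. \<forall>h\<in>S. tmul g h \<in> S"
      and Sm: "tminus_one (Suc n) \<notin> S"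
    define S1 where "S1 = {(a, p). (a, p # replicate n PI) \<in> S}"
    have rep: "map2 pmul (replicate n PI) (replicate n PI) = replicate n PI"
      by (induction n) auto
    have "\<exists>i<4. \<forall>a p. (a,p)\<in>S1 \<longrightarrow> a * pdiag p i = 1"
    proof (rule one_site)
      fix a p b q assume "(a,p)\<in>S1" "(b,q)\<in>S1"
      then have "tmul (a, p # replicate n PI) (b, q # replicate n PI) \<in> S"
        using Scl by (auto simp: S1_def)
      then show "(a*b, pmul p q) \<in> S1" by (simp add: S1_def tmul_def rep)
    next
      fix a p assume "(a,p)\<in>S1"
      then show "a = 1 \<or> a = -1" using Ssub by (auto simp: S1_def toyG_def)
    next
      show "(-1, PI) \<notin> S1" using Sm by (simp add: S1_def tminus_one_def)
    qed
    then obtain i where i: "i < 4" "\<forall>a p. (a,p)\<in>S1 \<longrightarrow> a * pdiag p i = 1" by blast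
    define S' where "S' = {(a * pdiag p i, ps) | a p ps. (a, p # ps) \<in> S}"
    have "S' \<subseteq> toyG n"
    proof
      fix x assume "x \<in> S'"
      then obtain a p ps where x: "x = (a * pdiag p i, ps)" "(a, p # ps) \<in> S"
        by (auto simp: S'_def)
      then have "a = 1 \<or> a = -1" "length ps = n" using Ssub by (auto simp: toyG_def)
      then show "x \<in> toyG n" using x pdiag_sign[OF i(1), of p] by (auto simp: toyG_def)
    qed
    moreover have "\<forall>g\<in>S'. \<forall>h\<in>S'. tmul g h \<in> S'"
    proof (intro ballI)
      fix g h assume "g \<in> S'" "h \<in> S'"
      then obtain a p ps b q qs where g: "g = (a * pdiag p i, ps)" "(a, p # ps) \<in> S"
        and h: "h = (b * pdiag q i, qs)" "(b, q # qs) \<in> S"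
        by (auto simp: S'_def)
      have "tmul (a, p # ps) (b, q # qs) \<in> S" using Scl g h by auto
      then have "(a * b, pmul p q # map2 pmul ps qs) \<in> S" by (simp add: tmul_def)
      then have "(a * b * pdiag (pmul p q) i, map2 pmul ps qs) \<in> S'"
        unfolding S'_def by blast
      then show "tmul g h \<in> S'" using g h pdiag_mul[OF i(1)]
        by (simp add: tmul_def algebra_simps)
    qed
    moreover have "tminus_one n \<notin> S'"
    proof
      assume "tminus_one n \<in> S'"
      then obtain a p where "(a, p # replicate n PI) \<in> S" "a * pdiag p i = -1"
        by (auto simp: S'_def tminus_one_def)
      then show False using i(2) by (auto simp: S1_def)
    qed
    ultimately obtain s' where s': "s' \<in> ontic n" "\<forall>g\<in>S'. val g s' = 1"
      using Suc.IH by blast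
    have "i # s' \<in> ontic (Suc n)" using s' i by (auto simp: ontic_def)
    moreover have "\<forall>g\<in>S. val g (i # s') = 1"
    proof
      fix g assume gS: "g \<in> S"
      then obtain a p ps where g: "g = (a, p # ps)"
        using Ssub by (cases g) (auto simp: toyG_def length_Suc_conv)
      then have "(a * pdiag p i, ps) \<in> S'" using gS unfolding S'_def by blast
      then have "val (a * pdiag p i, ps) s' = 1" using s' by blast
      then show "val g (i # s') = 1" using g by (simp add: val_def algebra_simps)
    qed
    ultimately show "\<exists>s\<in>ontic (Suc n). \<forall>g\<in>S. val g s = 1" by blast
  qed
qed

lemma map2_comm: "map2 pmul xs ys = map2 pmul ys xs"
proof (induction xs arbitrary: ys)
  case Nil then show ?case by simp
next
  case (Cons x xs) then show ?case by (cases ys) (auto simp: pmul_comm)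
qed

lemma map2_assoc: "map2 pmul (map2 pmul xs ys) zs = map2 pmul xs (map2 pmul ys zs)"
proof (induction xs arbitrary: ys zs)
  case Nil then show ?case by simp
next
  case (Cons x xs) then show ?case
    by (cases ys; cases zs) (auto simp: pmul_assoc)
qed

lemma map2_self: "map2 pmul xs xs = replicate (length xs) PI"
  by (induction xs) (auto simp: pmul_self)

lemma map2_rep: "map2 pmul (replicate (length xs) PI) xs = xs"
  by (induction xs) auto

lemma map2_rep2: "map2 pmul xs (replicate (length xs) PI) = xs"
  by (induction xs) (auto simp: pmul_PI2)

lemma tmul_comm: "tmul g h = tmul h g"
  by (simp add: tmul_def map2_comm mult.commute)

lemma tmul_assoc: "tmul (tmul g h) k = tmul g (tmul h k)"
  by (simp add: tmul_def map2_assoc mult.assoc)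

lemma tmul_toyG: "g \<in> toyG n \<Longrightarrow> h \<in> toyG n \<Longrightarrow> tmul g h \<in> toyG n"
  by (auto simp: toyG_def tmul_def)

lemma tone_mul: "x \<in> toyG n \<Longrightarrow> tmul (tone n) x = x"
  by (cases x) (auto simp: tmul_def tone_def toyG_def map2_rep)

lemma L2:
  assumes T: "toy_subgroup n T" and Tm: "tminus_one n \<notin> T"
    and g: "g \<in> toyG n" and gT: "g \<notin> T"
  shows "\<exists>s\<in>ontic n. (\<forall>t\<in>T. val t s = 1) \<and> val g s \<noteq> 1"
proof -
  define gm where "gm = (- fst g, snd g)"
  have vgm: "val gm s = - val g s" for s by (simp add: gm_def val_def)
  have gmG: "gm \<in> toyG n" using g by (auto simp: gm_def toyG_def)
  have Tsub: "T \<subseteq> toyG n" and Tcl: "\<forall>x\<in>T. \<forall>y\<in>T. tmul x y \<in> T" and Tone: "tone n \<in> T"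
    using T by (auto simp: toy_subgroup_def)
  show ?thesis
  proof (cases "gm \<in> T")
    case True
    obtain s where s: "s \<in> ontic n" "\<forall>t\<in>T. val t s = 1" using L1[of n, THEN spec[of _ T]] Tsub Tcl Tm by blast
    then have "val gm s = 1" using True by blast
    then have "val g s \<noteq> 1" using vgm[of s] by simp
    then show ?thesis using s by blast
  next
    case False
    define T' where "T' = T \<union> (tmul gm) ` T"
    have gmgm: "tmul gm gm = tone n"
      using g by (auto simp: gm_def tmul_def tone_def toyG_def map2_self)
    have T'sub: "T' \<subseteq> toyG n" using Tsub gmG by (auto simp: T'_def tmul_toyG)
    have T'cl: "\<forall>x\<in>T'. \<forall>y\<in>T'. tmul x y \<in> T'"
    proof (intro ballI)
      fix x y assume "x \<in> T'" "y \<in> T'"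
      then consider "x \<in> T" "y \<in> T"
        | t where "x \<in> T" "y = tmul gm t" "t \<in> T"
        | t where "x = tmul gm t" "t \<in> T" "y \<in> T"
        | t u where "x = tmul gm t" "t \<in> T" "y = tmul gm u" "u \<in> T"
        unfolding T'_def by blast
      then show "tmul x y \<in> T'"
      proof cases
        case 1 then show ?thesis using Tcl by (auto simp: T'_def)
      next
        case (2 t)
        have "tmul x y = tmul (tmul x gm) t" using 2 by (simp add: tmul_assoc)
        also have "\<dots> = tmul gm (tmul x t)" by (simp only: tmul_comm[of x gm] tmul_assoc)
        finally have "tmul x y = tmul gm (tmul x t)" .
        then show ?thesis using 2 Tcl by (auto simp: T'_def)
      next
        case (3 t)
        have "tmul x y = tmul gm (tmul t y)" using 3 by (simp add: tmul_assoc)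
        then show ?thesis using 3 Tcl by (auto simp: T'_def)
      next
        case (4 t u)
        have "tmul x y = tmul gm (tmul t (tmul gm u))" using 4 by (simp add: tmul_assoc)
        also have "tmul t (tmul gm u) = tmul gm (tmul t u)"
          by (simp only: tmul_assoc[symmetric] tmul_comm[of t gm])
        also have "tmul gm (tmul gm (tmul t u)) = tmul (tmul gm gm) (tmul t u)"
          by (simp only: tmul_assoc)
        also have "\<dots> = tmul t u"
        proof -
          have "tmul t u \<in> toyG n" using 4 Tcl Tsub by blast
          then show ?thesis using gmgm by (simp add: tone_mul)
        qed
        finally show ?thesis using 4 Tcl by (auto simp: T'_def)
      qed
    qed
    have T'm: "tminus_one n \<notin> T'"
    proof
      assume "tminus_one n \<in> T'"
      then obtain t where t: "t \<in> T" "tmul gm t = tminus_one n" using Tm by (auto simp: T'_def)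
      then have tG: "t \<in> toyG n" using Tsub by blast
      have "t = g"
      proof -
        have f: "- fst g * fst t = -1" and sn: "map2 pmul (snd g) (snd t) = replicate n PI"
          using t by (auto simp: gm_def tmul_def tminus_one_def)
        have "fst t = fst g" using f tG g by (cases g; cases t) (auto simp: toyG_def)
        moreover have "snd t = snd g"
        proof (rule nth_equalityI)
          show "length (snd t) = length (snd g)" using tG g by (cases g; cases t) (auto simp: toyG_def)
        next
          fix k assume k: "k < length (snd t)"
          have "map2 pmul (snd g) (snd t) ! k = PI" using sn k tG by (cases t) (auto simp: toyG_def)
          then have "pmul (snd g ! k) (snd t ! k) = PI" using k tG g
            by (cases g; cases t) (auto simp: toyG_def)
          then show "snd t ! k = snd g ! k" by (simp add: pmul_eq_PI)
        qed
        ultimately show ?thesis by (simp add: prod_eq_iff)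
      qed
      then show False using t gT by simp
    qed
    obtain s where s: "s \<in> ontic n" "\<forall>t\<in>T'. val t s = 1" using L1[of n, THEN spec[of _ T']] T'sub T'cl T'm by blast
    have "tmul gm (tone n) = gm" using gmG
      by (auto simp: gm_def tmul_def tone_def toyG_def map2_rep2)
    then have "gm \<in> T'" using Tone unfolding T'_def by (metis UnI2 imageI)
    then have "val g s \<noteq> 1" using s vgm[of s] by auto
    then show ?thesis using s by (auto simp: T'_def)
  qed
qed

definition embA :: "nat \<Rightarrow> toy \<Rightarrow> toy" where
  "embA k h = (fst h, snd h @ replicate k PI)"

definition embB :: "nat \<Rightarrow> toy \<Rightarrow> toy" where
  "embB k h = (fst h, replicate k PI @ snd h)"

lemma valA: "length (snd h) = length a \<Longrightarrow> val (embA k h) (a @ b) = val h a"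
  by (simp add: val_def embA_def zip_append prod_rep_PI)

lemma valB: "length a = k \<Longrightarrow> val (embB k h) (a @ b) = val h b"
  by (simp add: val_def embB_def zip_append prod_rep_PI)

lemma sum_rep: "sum_list (map2 (\<lambda>p q. xbit p * zbit q + zbit p * xbit q) (replicate k PI) (replicate k PI)) = 0"
  by (induction k) auto

lemma commA: "length (snd g) = length (snd h) \<Longrightarrow> tcommute (embA k g) (embA k h) = tcommute g h"
  by (simp add: tcommute_def embA_def sum_rep sum_list_replicate)

lemma commB: "length (snd g) = length (snd h) \<Longrightarrow> tcommute (embB k g) (embB k h) = tcommute g h"
  by (simp add: tcommute_def embB_def sum_rep sum_list_replicate)

lemma rep_rep: "map2 pmul (replicate k PI) (replicate k PI) = replicate k PI"
  by (induction k) auto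

lemma tmulA: "length (snd g) = length (snd h) \<Longrightarrow> tmul (embA k g) (embA k h) = embA k (tmul g h)"
  by (simp add: tmul_def embA_def zip_append rep_rep)

lemma tmulB: "length (snd g) = length (snd h) \<Longrightarrow> tmul (embB k g) (embB k h) = embB k (tmul g h)"
  by (simp add: tmul_def embB_def zip_append rep_rep)

lemma embA_tone: "embA k (tone m) = tone (m + k)"
  by (simp add: embA_def tone_def replicate_add)
lemma embB_tone: "embB k (tone m) = tone (k + m)"
  by (simp add: embB_def tone_def replicate_add)
lemma embA_tm: "embA k (tminus_one m) = tminus_one (m + k)"
  by (simp add: embA_def tminus_one_def replicate_add)
lemma embB_tm: "embB k (tminus_one m) = tminus_one (k + m)"
  by (simp add: embB_def tminus_one_def replicate_add)

lemma embA_G: "h \<in> toyG m \<Longrightarrow> embA k h \<in> toyG (m + k)"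
  by (cases h) (simp add: embA_def toyG_def)
lemma embB_G: "h \<in> toyG m \<Longrightarrow> embB k h \<in> toyG (k + m)"
  by (cases h) (simp add: embB_def toyG_def)

lemma embA_inj: "embA k g = embA k h \<Longrightarrow> length (snd g) = length (snd h) \<Longrightarrow> g = h"
  by (cases g; cases h) (simp add: embA_def)
lemma embB_inj: "embB k g = embB k h \<Longrightarrow> g = h"
  by (cases g; cases h) (simp add: embB_def)

lemma SA_decomp:
  assumes "g \<in> S_A NA NB S" "S \<subseteq> toyG (NA + NB)"
  shows "g = embA NB (fst g, take NA (snd g)) \<and> (fst g, take NA (snd g)) \<in> toyG NA"
proof -
  have gS: "g \<in> S" and pi: "\<forall>k. NA \<le> k \<and> k < NA + NB \<longrightarrow> snd g ! k = PI"
    using assms(1) by (auto simp: S_A_def)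
  have gG: "g \<in> toyG (NA + NB)" using gS assms(2) by blast
  then have len: "length (snd g) = NA + NB" and sg: "fst g = 1 \<or> fst g = -1"
    by (cases g; simp add: toyG_def)+
  have "drop NA (snd g) = replicate NB PI"
    by (rule nth_equalityI) (use len pi in auto)
  then have "snd g = take NA (snd g) @ replicate NB PI" by (metis append_take_drop_id)
  then show ?thesis using len sg by (cases g) (auto simp: embA_def toyG_def)
qed

lemma SB_decomp:
  assumes "g \<in> S_B NA NB S" "S \<subseteq> toyG (NA + NB)"
  shows "g = embB NA (fst g, drop NA (snd g)) \<and> (fst g, drop NA (snd g)) \<in> toyG NB"
proof -
  have gS: "g \<in> S" and pi: "\<forall>k. k < NA \<longrightarrow> snd g ! k = PI"
    using assms(1) by (auto simp: S_B_def)
  have gG: "g \<in> toyG (NA + NB)" using gS assms(2) by blast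
  then have len: "length (snd g) = NA + NB" and sg: "fst g = 1 \<or> fst g = -1"
    by (cases g; simp add: toyG_def)+
  have "take NA (snd g) = replicate NA PI"
    by (rule nth_equalityI) (use len pi in auto)
  then have "snd g = replicate NA PI @ drop NA (snd g)" by (metis append_take_drop_id)
  then show ?thesis using len sg by (cases g) (auto simp: embB_def toyG_def)
qed

lemma embA_SA: "h \<in> toyG NA \<Longrightarrow> embA NB h \<in> S \<Longrightarrow> embA NB h \<in> S_A NA NB S"
  by (cases h) (auto simp: S_A_def embA_def toyG_def nth_append)

lemma embB_SB: "h \<in> toyG NB \<Longrightarrow> embB NA h \<in> S \<Longrightarrow> embB NA h \<in> S_B NA NB S"
  by (cases h) (auto simp: S_B_def embB_def toyG_def nth_append)

lemma toyG_len: "h \<in> toyG m \<Longrightarrow> length (snd h) = m"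
  by (cases h) (simp add: toyG_def)

theorem mainTheorem7:
  fixes NA NB :: nat and S :: "toy set"
  assumes "toy_stabilizer (NA + NB) S"
    and "max_info (NA + NB) S"
  shows "entangled NA NB S \<longleftrightarrow> S \<noteq> gen (NA + NB) (S_A NA NB S \<union> S_B NA NB S)"
proof -
  define N where "N = NA + NB"
  define T where "T = gen (NA + NB) (S_A NA NB S \<union> S_B NA NB S)"
  have Ssg: "toy_subgroup N S" and Scomm: "\<forall>g\<in>S. \<forall>h\<in>S. tcommute g h"
    and Sm: "tminus_one N \<notin> S"
    using assms(1) by (auto simp: toy_stabilizer_def N_def)
  have Ssub: "S \<subseteq> toyG N" and Sone: "tone N \<in> S" and Scl: "\<forall>g\<in>S. \<forall>h\<in>S. tmul g h \<in> S"
    using Ssg by (auto simp: toy_subgroup_def)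
  have TS: "T \<subseteq> S" unfolding T_def N_def[symmetric]
    by (rule gen_sub[OF Ssg]) (auto simp: S_A_def S_B_def)
  have epi: "epistemic m X = {s \<in> ontic m. \<forall>g\<in>X. val g s = 1}" for m X
    by (simp add: epistemic_def fixes_val)
  show ?thesis unfolding T_def[symmetric]
  proof
    assume ent: "entangled NA NB S"
    show "S \<noteq> T"
    proof
      assume ST: "S = T"
      define SA' where "SA' = {h \<in> toyG NA. embA NB h \<in> S}"
      define SB' where "SB' = {h \<in> toyG NB. embB NA h \<in> S}"
      have stA: "toy_stabilizer NA SA'"
        unfolding toy_stabilizer_def toy_subgroup_def
      proof (intro conjI ballI)
        show "SA' \<subseteq> toyG NA" by (auto simp: SA'_def)
        have "tone NA \<in> toyG NA" by (simp add: tone_def toyG_def)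
        then show "tone NA \<in> SA'" using Sone by (simp add: SA'_def embA_tone N_def)
        show "tminus_one NA \<notin> SA'" using Sm by (simp add: SA'_def embA_tm N_def)
      next
        fix g h assume "g \<in> SA'" "h \<in> SA'"
        then have g: "g \<in> toyG NA" "embA NB g \<in> S" and h: "h \<in> toyG NA" "embA NB h \<in> S"
          by (auto simp: SA'_def)
        have l: "length (snd g) = length (snd h)" using g h by (simp add: toyG_len)
        have "embA NB (tmul g h) \<in> S" 
          using Scl g(2) h(2) tmulA[OF l, of NB, symmetric] by simp
        then show "tmul g h \<in> SA'" using g h by (simp add: SA'_def tmul_toyG)
        show "tcommute g h" using Scomm g h commA[OF l, of NB] by auto
      qed
      have stB: "toy_stabilizer NB SB'"
        unfolding toy_stabilizer_def toy_subgroup_def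
      proof (intro conjI ballI)
        show "SB' \<subseteq> toyG NB" by (auto simp: SB'_def)
        have "tone NB \<in> toyG NB" by (simp add: tone_def toyG_def)
        then show "tone NB \<in> SB'" using Sone by (simp add: SB'_def embB_tone N_def)
        show "tminus_one NB \<notin> SB'" using Sm by (simp add: SB'_def embB_tm N_def)
      next
        fix g h assume "g \<in> SB'" "h \<in> SB'"
        then have g: "g \<in> toyG NB" "embB NA g \<in> S" and h: "h \<in> toyG NB" "embB NA h \<in> S"
          by (auto simp: SB'_def)
        have l: "length (snd g) = length (snd h)" using g h by (simp add: toyG_len)
        have "embB NA (tmul g h) \<in> S" 
          using Scl g(2) h(2) tmulB[OF l, of NA, symmetric] by simp
        then show "tmul g h \<in> SB'" using g h by (simp add: SB'_def tmul_toyG)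
        show "tcommute g h" using Scomm g h commB[OF l, of NA] by auto
      qed
      have "epistemic (NA + NB) S = {a @ b | a b. a \<in> epistemic NA SA' \<and> b \<in> epistemic NB SB'}"
      proof
        show "epistemic (NA + NB) S \<subseteq> {a @ b | a b. a \<in> epistemic NA SA' \<and> b \<in> epistemic NB SB'}"
        proof
          fix s assume "s \<in> epistemic (NA + NB) S"
          then have s: "s \<in> ontic N" "\<forall>g\<in>S. val g s = 1" by (auto simp: epi N_def)
          have lens: "length s = NA + NB" using s by (simp add: ontic_def N_def)
          have "take NA s \<in> epistemic NA SA'"
          proof -
            have "take NA s \<in> ontic NA" using s lens
              by (auto simp: ontic_def N_def dest: in_set_takeD)
            moreover have "\<forall>h\<in>SA'. val h (take NA s) = 1"
            proof
              fix h assume h: "h \<in> SA'"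
              then have "length (snd h) = length (take NA s)" using lens
                by (auto simp: SA'_def toyG_len)
              then have "val (embA NB h) (take NA s @ drop NA s) = val h (take NA s)"
                by (rule valA)
              then show "val h (take NA s) = 1" using s h by (auto simp: SA'_def)
            qed
            ultimately show ?thesis by (simp add: epi)
          qed
          moreover have "drop NA s \<in> epistemic NB SB'"
          proof -
            have "drop NA s \<in> ontic NB" using s lens
              by (auto simp: ontic_def N_def dest: in_set_dropD)
            moreover have "\<forall>h\<in>SB'. val h (drop NA s) = 1"
            proof
              fix h assume h: "h \<in> SB'"
              have "length (take NA s) = NA" using lens by simp
              then have "val (embB NA h) (take NA s @ drop NA s) = val h (drop NA s)"
                by (rule valB)
              then show "val h (drop NA s) = 1" using s h by (auto simp: SB'_def)
            qed
            ultimately show ?thesis by (simp add: epi)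
          qed
          ultimately show "s \<in> {a @ b | a b. a \<in> epistemic NA SA' \<and> b \<in> epistemic NB SB'}"
            by (metis (mono_tags, lifting) append_take_drop_id mem_Collect_eq)
        qed
      next
        show "{a @ b | a b. a \<in> epistemic NA SA' \<and> b \<in> epistemic NB SB'} \<subseteq> epistemic (NA + NB) S"
        proof
          fix s assume "s \<in> {a @ b | a b. a \<in> epistemic NA SA' \<and> b \<in> epistemic NB SB'}"
          then obtain a b where s: "s = a @ b" and a: "a \<in> epistemic NA SA'" and b: "b \<in> epistemic NB SB'"
            by blast
          have a': "a \<in> ontic NA" "\<forall>h\<in>SA'. val h a = 1" and b': "b \<in> ontic NB" "\<forall>h\<in>SB'. val h b = 1"
            using a b by (auto simp: epi)
          have sO: "s \<in> ontic N" using s a' b' by (auto simp: ontic_def N_def)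
          have base: "\<forall>x\<in>S_A NA NB S \<union> S_B NA NB S. val x s = 1"
          proof
            fix x assume "x \<in> S_A NA NB S \<union> S_B NA NB S"
            then show "val x s = 1"
            proof
              assume xA: "x \<in> S_A NA NB S"
              define h where "h = (fst x, take NA (snd x))"
              have d: "x = embA NB h" "h \<in> toyG NA" using SA_decomp[OF xA] Ssub by (auto simp: h_def N_def)
              then have hS: "h \<in> SA'" using xA by (auto simp: SA'_def S_A_def)
              have "length (snd h) = length a" using d a' by (simp add: toyG_len ontic_def)
              then have "val (embA NB h) (a @ b) = val h a" by (rule valA)
              then show ?thesis using a'(2) d(1) s hS by simp
            next
              assume xB: "x \<in> S_B NA NB S"
              define h where "h = (fst x, drop NA (snd x))"
              have d: "x = embB NA h" "h \<in> toyG NB" using SB_decomp[OF xB] Ssub by (auto simp: h_def N_def)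
              then have hS: "h \<in> SB'" using xB by (auto simp: SB'_def S_B_def)
              have "length a = NA" using a' by (simp add: ontic_def)
              then have "val (embB NA h) (a @ b) = val h b" by (rule valB)
              then show ?thesis using b'(2) d(1) s hS by simp
            qed
          qed
          have "\<forall>g\<in>S. val g s = 1"
          proof
            fix g assume "g \<in> S"
            then have "g \<in> T" using ST by simp
            then have "g \<in> gen N (S_A NA NB S \<union> S_B NA NB S)" unfolding T_def N_def .
            moreover have "S_A NA NB S \<union> S_B NA NB S \<subseteq> toyG N"
              using Ssub by (auto simp: S_A_def S_B_def)
            ultimately show "val g s = 1" using fix_gen[OF _ sO base] by blast
          qed
          then show "s \<in> epistemic (NA + NB) S" using sO by (simp add: epi N_def)
        qed
      qed
      then show False using ent stA stB unfolding entangled_def valid_epistemic_def by blast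
    qed
  next
    assume "S \<noteq> T"
    show "entangled NA NB S"
      unfolding entangled_def
    proof
      assume "\<exists>EA EB. valid_epistemic NA EA \<and> valid_epistemic NB EB \<and>
          epistemic (NA + NB) S = {a @ b | a b. a \<in> EA \<and> b \<in> EB}"
      then obtain EA EB where vA: "valid_epistemic NA EA" and vB: "valid_epistemic NB EB"
        and E0: "epistemic (NA + NB) S = {a @ b | a b. a \<in> EA \<and> b \<in> EB}" by blast
      obtain TA where stA: "toy_stabilizer NA TA" and EA: "EA = epistemic NA TA"
        using vA unfolding valid_epistemic_def by blast
      obtain TB where stB: "toy_stabilizer NB TB" and EB: "EB = epistemic NB TB"
        using vB unfolding valid_epistemic_def by blast
      have E: "epistemic N S = {a @ b | a b. a \<in> epistemic NA TA \<and> b \<in> epistemic NB TB}"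
        using E0 EA EB N_def by simp
      have TAG: "TA \<subseteq> toyG NA" and TBG: "TB \<subseteq> toyG NB"
        using stA stB by (auto simp: toy_stabilizer_def toy_subgroup_def)
      have inS: "x \<in> S" if xG: "x \<in> toyG N" and all: "\<And>s'. s' \<in> epistemic N S \<Longrightarrow> val x s' = 1" for x
      proof (rule ccontr)
        assume "x \<notin> S"
        from L2[OF Ssg Sm xG this] obtain s' where "s' \<in> ontic N" "\<forall>t\<in>S. val t s' = 1" "val x s' \<noteq> 1"
          by blast
        then show False using all by (auto simp: epi)
      qed
      have EA_in: "embA NB h \<in> S" if h: "h \<in> TA" for h
      proof (rule inS)
        have "h \<in> toyG NA" using h TAG by blast
        then show "embA NB h \<in> toyG N" unfolding N_def by (rule embA_G)
      next
        fix s' assume "s' \<in> epistemic N S"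
        then have "s' \<in> {a @ b | a b. a \<in> epistemic NA TA \<and> b \<in> epistemic NB TB}" using E by simp
        then obtain a b where "s' = a @ b" "a \<in> epistemic NA TA" by blast
        moreover then have "length (snd h) = length a" using h TAG
          by (auto simp: epi ontic_def toyG_len)
        ultimately show "val (embA NB h) s' = 1" using valA h by (auto simp: epi)
      qed
      have EB_in: "embB NA h \<in> S" if h: "h \<in> TB" for h
      proof (rule inS)
        have "h \<in> toyG NB" using h TBG by blast
        then show "embB NA h \<in> toyG N" unfolding N_def by (rule embB_G)
      next
        fix s' assume "s' \<in> epistemic N S"
        then have "s' \<in> {a @ b | a b. a \<in> epistemic NA TA \<and> b \<in> epistemic NB TB}" using E by simp
        then obtain a b where "s' = a @ b" "a \<in> epistemic NA TA" "b \<in> epistemic NB TB" by blast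
        moreover then have "length a = NA" by (auto simp: epi ontic_def)
        ultimately show "val (embB NA h) s' = 1" using valB h by (auto simp: epi)
      qed
      have "S \<subseteq> T"
      proof
        fix g assume gS: "g \<in> S"
        show "g \<in> T"
        proof (rule ccontr)
          assume gT: "g \<notin> T"
          have Tsg: "toy_subgroup N T"
            unfolding toy_subgroup_def
          proof (intro conjI ballI)
            show "T \<subseteq> toyG N" using TS Ssub by blast
            show "tone N \<in> T" by (simp add: T_def N_def gen.gen_one)
          next
            fix x y assume "x \<in> T" "y \<in> T"
            then show "tmul x y \<in> T" by (simp add: T_def gen.gen_mul)
          qed
          have Tm: "tminus_one N \<notin> T" using TS Sm by blast
          obtain s where sO: "s \<in> ontic N" and sT: "\<forall>t\<in>T. val t s = 1" and sg: "val g s \<noteq> 1"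
            using L2[OF Tsg Tm _ gT] gS Ssub by blast
          have lens: "length s = NA + NB" using sO by (simp add: ontic_def N_def)
          have "take NA s \<in> epistemic NA TA"
          proof -
            have "take NA s \<in> ontic NA" using sO lens
              by (auto simp: ontic_def N_def dest: in_set_takeD)
            moreover have "\<forall>h\<in>TA. val h (take NA s) = 1"
            proof
              fix h assume h: "h \<in> TA"
              have "embA NB h \<in> S_A NA NB S" using embA_SA EA_in h TAG by blast
              then have "embA NB h \<in> T" by (simp add: T_def gen.gen_base)
              then have "val (embA NB h) s = 1" using sT by blast
              moreover have "length (snd h) = length (take NA s)" using lens h TAG
                by (auto simp: toyG_len)
              ultimately show "val h (take NA s) = 1" using valA
                by (metis append_take_drop_id)
            qed
            ultimately show ?thesis by (simp add: epi)
          qed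
          moreover have "drop NA s \<in> epistemic NB TB"
          proof -
            have "drop NA s \<in> ontic NB" using sO lens
              by (auto simp: ontic_def N_def dest: in_set_dropD)
            moreover have "\<forall>h\<in>TB. val h (drop NA s) = 1"
            proof
              fix h assume h: "h \<in> TB"
              have "embB NA h \<in> S_B NA NB S" using embB_SB EB_in h TBG by blast
              then have "embB NA h \<in> T" by (simp add: T_def gen.gen_base)
              then have "val (embB NA h) s = 1" using sT by blast
              moreover have "length (take NA s) = NA" using lens by simp
              ultimately show "val h (drop NA s) = 1" using valB
                by (metis append_take_drop_id)
            qed
            ultimately show ?thesis by (simp add: epi)
          qed
          ultimately have "s \<in> {a @ b | a b. a \<in> epistemic NA TA \<and> b \<in> epistemic NB TB}"
            by (metis (mono_tags, lifting) append_take_drop_id mem_Collect_eq)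
          then have "s \<in> epistemic (NA + NB) S" using E N_def by simp
          then show False using gS sg by (simp add: epi)
        qed
      qed
      then show False using TS \<open>S \<noteq> T\<close> by blast
    qed
  qed
qed

end
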